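(* For each pair $(N,n)\in\{(N,1): N\ge1\}\cup\{(2,2),(3,2),(3,3)\}$ we have $\chi_n(N\times n,2)=2^N$.
   Context: $\mathbb{F}_2^{N\times n}$ is the set of $N\times n$ binary matrices. An exactly $d$-distance coloring is a map $\Gamma:\mathbb{F}_q^{N\times n}\to\{1,\dots,L\}$ such that $\Gamma(M_1)\ne\Gamma(M_2)$ whenever $\mathrm{Rk}(M_1-M_2)=d$ (rank over $\mathbb{F}_q$). $\chi_d(N\times n,q)$ denotes the minimum number $L$ of colors in an exactly $d$-distance coloring. *)

theory Defs
  imports "HOL-Library.Z2" "Jordan_Normal_Form.DL_Rank"
begin

definition mat_rank :: "nat \<Rightarrow> 'a::field mat \<Rightarrow> nat" where
  "mat_rank N A = vec_space.rank N A"

definition exact_dist_coloring ::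
  "'a::field itself \<Rightarrow> nat \<Rightarrow> nat \<Rightarrow> nat \<Rightarrow> nat \<Rightarrow> ('a mat \<Rightarrow> nat) \<Rightarrow> bool" where
  "exact_dist_coloring ty d N n L \<Gamma> \<longleftrightarrow>
     \<Gamma> ` carrier_mat N n \<subseteq> {1..L} \<and>
     (\<forall>M1\<in>carrier_mat N n. \<forall>M2\<in>carrier_mat N n.
        mat_rank N (M1 - M2) = d \<longrightarrow> \<Gamma> M1 \<noteq> \<Gamma> M2)"

definition chi :: "'a::field itself \<Rightarrow> nat \<Rightarrow> nat \<Rightarrow> nat \<Rightarrow> nat" where
  "chi ty d N n = (LEAST L. \<exists>\<Gamma>. exact_dist_coloring ty d N n L \<Gamma>)"

end

theory Submission
  imports Defs
begin

context vec_space begin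

lemma non_distinct_low_rank':
  assumes "A \<in> carrier_mat n nc" and "\<not> distinct (cols A)"
  shows "rank A < nc"
proof -
  obtain S where S: "maximal S (\<lambda>T. T \<subseteq> set (cols A) \<and> lin_indpt T)"
    using maximal_exists[of "(\<lambda>T. T \<subseteq> set (cols A) \<and> lin_indpt T)" "card (set (cols A))" "{}"]
    by (meson List.finite_set card_mono empty_iff empty_subsetI finite_lin_indpt2 rev_finite_subset)
  then have "card S \<le> card (set (cols A))" by (simp add: card_mono maximal_def)
  then have "card S < nc"
    using assms(1) cols_length card_length \<open>\<not> distinct (cols A)\<close> card_distinct carrier_matD(2) nat_less_le
    by (metis dual_order.antisym dual_order.trans)
  then show ?thesis
    using rank_card_indpt[OF assms(1) S] by simp
qed

lemma full_rank_kernel: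
  assumes A: "A \<in> carrier_mat n nc"
  shows "rank A = nc \<longleftrightarrow> (\<forall>v\<in>carrier_vec nc. v \<noteq> 0\<^sub>v nc \<longrightarrow> A *\<^sub>v v \<noteq> 0\<^sub>v n)"
proof
  assume r: "rank A = nc"
  show "\<forall>v\<in>carrier_vec nc. v \<noteq> 0\<^sub>v nc \<longrightarrow> A *\<^sub>v v \<noteq> 0\<^sub>v n"
  proof (intro ballI impI notI)
    fix v assume v: "v \<in> carrier_vec nc" "v \<noteq> 0\<^sub>v nc" "A *\<^sub>v v = 0\<^sub>v n"
    show False
    proof (cases "distinct (cols A)")
      case True
      then have "lin_indpt (set (cols A))" using full_rank_lin_indpt A r by auto
      then show False using lin_depI[OF A v True] by blast
    next
      case False
      then show False using non_distinct_low_rank'[OF A] r by simp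
    qed
  qed
next
  assume k: "\<forall>v\<in>carrier_vec nc. v \<noteq> 0\<^sub>v nc \<longrightarrow> A *\<^sub>v v \<noteq> 0\<^sub>v n"
  have uv: "A *\<^sub>v unit_vec nc i = col A i" if "i < nc" for i
    by (rule eq_vecI, insert A that, auto)
  have d: "distinct (cols A)"
  proof (rule ccontr)
    assume "\<not> distinct (cols A)"
    then obtain i j where ij: "i\<noteq>j" "(cols A) ! i = (cols A) ! j" "i<length (cols A)" "j<length (cols A)"
      using distinct_conv_nth by blast
    then have c: "col A i = col A j" "i<nc" "j<nc" using A by auto
    let ?v = "unit_vec nc i - unit_vec nc j :: 'a vec"
    have "?v \<in> carrier_vec nc" by simp
    moreover have "?v \<noteq> 0\<^sub>v nc"
    proof
      assume "?v = 0\<^sub>v nc"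
      then have "?v $ i = 0\<^sub>v nc $ i" by (simp only:)
      then show False using c ij by simp
    qed
    moreover have "A *\<^sub>v ?v = 0\<^sub>v n"
      using mult_minus_distrib_mat_vec[OF A, of "unit_vec nc i" "unit_vec nc j"] uv c A
      by simp
    ultimately show False using k by blast
  qed
  have "lin_indpt (set (cols A))" using lin_depE[OF A _ d] k by metis
  then show "rank A = nc" using lin_indpt_full_rank[OF A d] by metis
qed

end


lemma bit_UNIV: "(UNIV :: bit set) = {0, 1}"
proof -
  have "x = 0 \<or> x = 1" for x :: bit by (cases x) auto
  then show ?thesis by auto
qed

lemma card_bit: "card (UNIV :: bit set) = 2"
  by (simp add: bit_UNIV)

lemma card_carrier_vec_bit: "card (carrier_vec N :: bit vec set) = 2 ^ N"
proof -
  let ?B = "{xs. set xs \<subseteq> (UNIV::bit set) \<and> length xs = N}"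
  have "bij_betw list_of_vec (carrier_vec N :: bit vec set) ?B"
  proof (unfold bij_betw_def, intro conjI)
    show "inj_on list_of_vec (carrier_vec N :: bit vec set)"
    proof (rule inj_onI)
      fix x y :: "bit vec" assume "list_of_vec x = list_of_vec y"
      then have "vec_of_list (list_of_vec x) = vec_of_list (list_of_vec y)" by (rule arg_cong)
      then show "x = y" by (simp only: vec_list)
    qed
    show "list_of_vec ` (carrier_vec N :: bit vec set) = ?B"
    proof
      show "list_of_vec ` (carrier_vec N :: bit vec set) \<subseteq> ?B"
      proof
        fix y assume "y \<in> list_of_vec ` (carrier_vec N :: bit vec set)"
        then obtain v :: "bit vec" where v: "v \<in> carrier_vec N" "y = list_of_vec v" by blast
        from v(1) have d: "dim_vec v = N" by (rule carrier_vecD)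
        have "length y = N" unfolding v(2) length_list_of_vec d ..
        then show "y \<in> ?B" by (simp only: mem_Collect_eq subset_UNIV simp_thms)
      qed
      show "?B \<subseteq> list_of_vec ` (carrier_vec N :: bit vec set)"
      proof
        fix xs :: "bit list" assume "xs \<in> ?B"
        then have "length xs = N" by blast
        then have "vec_of_list xs \<in> carrier_vec N" by (intro carrier_vecI) (simp only: dim_vec_of_list)
        then show "xs \<in> list_of_vec ` carrier_vec N" by (rule image_eqI[where x="vec_of_list xs" and f=list_of_vec, OF list_vec[of xs, symmetric]])
      qed
    qed
  qed
  then have "card (carrier_vec N :: bit vec set) = card ?B" using bij_betw_same_card by blast
  also have "\<dots> = card (UNIV :: bit set) ^ N"
    by (rule card_lists_length_eq) (simp only: bit_UNIV finite.emptyI finite_insert)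
  also have "\<dots> = 2 ^ N" unfolding card_bit ..
  finally show ?thesis .
qed

lemma finite_carrier_vec_bit: "finite (carrier_vec N :: bit vec set)"
  by (rule card_ge_0_finite) (simp add: card_carrier_vec_bit)

lemma vec_minus_zero_eq:
  fixes a b :: "bit vec"
  assumes "a \<in> carrier_vec N" "b \<in> carrier_vec N" "a - b = 0\<^sub>v N"
  shows "a = b"
proof (rule eq_vecI)
  fix i assume i: "i < dim_vec b"
  have "(a - b) $ i = 0\<^sub>v N $ i" using assms(3) by (simp only:)
  then have "a $ i - b $ i = 0" using i assms(1,2) by simp
  then show "a $ i = b $ i" using right_minus_eq[of "a $ i" "b $ i"] by blast
qed (use assms in auto)

lemma lower_bound_gen:
  fixes mk :: "bit vec \<Rightarrow> bit mat"
  assumes car: "\<And>a. a \<in> carrier_vec N \<Longrightarrow> mk a \<in> carrier_mat N n"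
  and lin: "\<And>a b. a \<in> carrier_vec N \<Longrightarrow> b \<in> carrier_vec N \<Longrightarrow> mk a - mk b = mk (a - b)"
  and ker: "\<And>a v. a \<in> carrier_vec N \<Longrightarrow> a \<noteq> 0\<^sub>v N \<Longrightarrow> v \<in> carrier_vec n \<Longrightarrow> v \<noteq> 0\<^sub>v n
              \<Longrightarrow> mk a *\<^sub>v v \<noteq> 0\<^sub>v N"
  and col: "exact_dist_coloring TYPE(bit) n N n L \<Gamma>"
  shows "2 ^ N \<le> L"
proof -
  have inj: "inj_on (\<Gamma> \<circ> mk) (carrier_vec N)"
  proof (rule inj_onI, rule ccontr)
    fix a b assume a: "a \<in> carrier_vec N" and b: "b \<in> carrier_vec N"
      and eq: "(\<Gamma> \<circ> mk) a = (\<Gamma> \<circ> mk) b" and ne: "a \<noteq> b"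
    have ab: "a - b \<in> carrier_vec N" using a b by simp
    have nz: "a - b \<noteq> 0\<^sub>v N" using vec_minus_zero_eq[OF a b] ne by blast
    have "mat_rank N (mk (a - b)) = n"
      unfolding mat_rank_def
      using vec_space.full_rank_kernel[OF car[OF ab]] ker[OF ab nz] by blast
    then have "mat_rank N (mk a - mk b) = n" using lin[OF a b] by simp
    then have "\<Gamma> (mk a) \<noteq> \<Gamma> (mk b)"
      using col car[OF a] car[OF b] unfolding exact_dist_coloring_def by blast
    then show False using eq by simp
  qed
  have img: "(\<Gamma> \<circ> mk) ` carrier_vec N \<subseteq> {1..L}"
    using col car unfolding exact_dist_coloring_def by auto
  have "card (carrier_vec N :: bit vec set) \<le> card {1..L}"
    by (rule card_inj_on_le[OF inj img]) simp
  then show ?thesis by (simp add: card_carrier_vec_bit)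
qed

lemma upper_bound_gen:
  assumes n: "n \<ge> 1"
  shows "\<exists>\<Gamma>. exact_dist_coloring TYPE(bit) n N n (2 ^ N) \<Gamma>"
proof -
  obtain f where f0: "bij_betw f (carrier_vec N :: bit vec set) {0..<card (carrier_vec N :: bit vec set)}"
    using ex_bij_betw_finite_nat[OF finite_carrier_vec_bit[of N]] by blast
  have f: "bij_betw f (carrier_vec N :: bit vec set) {0..<(2::nat) ^ N}"
    using f0 unfolding card_carrier_vec_bit .
  define \<Gamma> where "\<Gamma> M = f (col M 0) + 1" for M :: "bit mat"
  have "exact_dist_coloring TYPE(bit) n N n (2 ^ N) \<Gamma>"
    unfolding exact_dist_coloring_def
  proof (intro conjI ballI impI)
    show "\<Gamma> ` carrier_mat N n \<subseteq> {1..2 ^ N}"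
    proof
      fix x assume "x \<in> \<Gamma> ` carrier_mat N n"
      then obtain M where M: "M \<in> carrier_mat N n" "x = \<Gamma> M" by blast
      then have "col M 0 \<in> carrier_vec N" using col_carrier_vec[of 0 n M N] n by simp
      then have "f (col M 0) < 2 ^ N" using f bij_betwE by fastforce
      then show "x \<in> {1..2 ^ N}" using M \<Gamma>_def by simp
    qed
  next
    fix M1 M2 :: "bit mat" assume M1: "M1 \<in> carrier_mat N n" and M2: "M2 \<in> carrier_mat N n"
      and r: "mat_rank N (M1 - M2) = n"
    have D: "M1 - M2 \<in> carrier_mat N n" using M1 M2 minus_carrier_mat by blast
    have kk: "\<forall>v\<in>carrier_vec n. v \<noteq> 0\<^sub>v n \<longrightarrow> (M1 - M2) *\<^sub>v v \<noteq> 0\<^sub>v N"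
      using r vec_space.full_rank_kernel[OF D] unfolding mat_rank_def by blast
    have n0: "0 < n" using n by simp
    have "(M1 - M2) *\<^sub>v unit_vec n 0 \<noteq> 0\<^sub>v N"
      using kk unit_vec_carrier[of n 0] unit_vec_nonzero[OF n0] by blast
    moreover have "(M1 - M2) *\<^sub>v unit_vec n 0 = col (M1 - M2) 0"
      by (rule eq_vecI, insert D n0, auto)
    moreover have "col (M1 - M2) 0 = col M1 0 - col M2 0"
      by (rule eq_vecI, insert M1 M2 n0, auto)
    moreover have c12: "col M1 0 \<in> carrier_vec N" "col M2 0 \<in> carrier_vec N"
      using M1 M2 n col_carrier_vec[of 0 n M1 N] col_carrier_vec[of 0 n M2 N] by auto
    ultimately have "col M1 0 \<noteq> col M2 0" by auto
    with c12 have "f (col M1 0) \<noteq> f (col M2 0)"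
      using f unfolding bij_betw_def inj_on_def by blast
    then show "\<Gamma> M1 \<noteq> \<Gamma> M2" unfolding \<Gamma>_def by simp
  qed
  then show ?thesis by blast
qed

lemma chi_eq_gen:
  assumes n: "n \<ge> 1"
  and low: "\<And>L \<Gamma>. exact_dist_coloring TYPE(bit) n N n L \<Gamma> \<Longrightarrow> 2 ^ N \<le> L"
  shows "chi TYPE(bit) n N n = 2 ^ N"
  unfolding chi_def
proof (rule Least_equality)
  show "\<exists>\<Gamma>. exact_dist_coloring TYPE(bit) n N n (2 ^ N) \<Gamma>" using upper_bound_gen[OF n] .
next
  fix L assume "\<exists>\<Gamma>. exact_dist_coloring TYPE(bit) n N n L \<Gamma>"
  then show "2 ^ N \<le> L" using low by blast
qed

lemma F8: fixes a0 a1 a2 v0 v1 v2 :: bit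
  assumes "a0 * v0 + a2 * v1 + a1 * v2 = 0"
   "a1 * v0 + (a0 + a2) * v1 + (a1 + a2) * v2 = 0"
   "a2 * v0 + a1 * v1 + (a0 + a2) * v2 = 0"
   "\<not>(a0 = 0 \<and> a1 = 0 \<and> a2 = 0)" "\<not>(v0 = 0 \<and> v1 = 0 \<and> v2 = 0)"
 shows False
  using assms by (cases a0; cases a1; cases a2; cases v0; cases v1; cases v2) simp_all

definition e33 :: "bit vec \<Rightarrow> nat \<Rightarrow> nat \<Rightarrow> bit" where
  "e33 a i j = (if j = 0 then a $ i
     else if j = 1 then (if i = 0 then a$2 else if i = 1 then a$0 + a$2 else a$1)
     else (if i = 0 then a$1 else if i = 1 then a$1 + a$2 else a$0 + a$2))"

definition mk33 :: "bit vec \<Rightarrow> bit mat" where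
  "mk33 a = mat 3 3 (\<lambda>(i,j). e33 a i j)"

lemma vec3_zero: "v \<in> carrier_vec 3 \<Longrightarrow> (v = 0\<^sub>v 3) \<longleftrightarrow> (v$0 = 0 \<and> v$1 = 0 \<and> v$2 = 0)"
  apply (auto simp: vec_eq_iff)
  by (metis less_2_cases numeral_2_eq_2 numeral_3_eq_3 less_Suc_eq)

lemma mk33_kernel:
  assumes a: "a \<in> carrier_vec 3" "a \<noteq> 0\<^sub>v 3" and v: "v \<in> carrier_vec 3" "v \<noteq> 0\<^sub>v 3"
  shows "mk33 a *\<^sub>v v \<noteq> 0\<^sub>v 3"
proof
  assume h: "mk33 a *\<^sub>v v = 0\<^sub>v 3"
  have c: "(mk33 a *\<^sub>v v) $ i = (\<Sum>j<3. e33 a i j * v $ j)" if "i < 3" for i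
    using that v by (simp add: mk33_def scalar_prod_def atLeast0LessThan)
  have z: "(mk33 a *\<^sub>v v) $ i = 0" if "i < 3" for i using h that by simp
  have E: "(\<Sum>j<3. e33 a i j * v $ j) = e33 a i 0 * v$0 + e33 a i 1 * v$1 + e33 a i 2 * v$2" for i
    by (simp add: eval_nat_numeral)
  have 0: "a$0 * v$0 + a$2 * v$1 + a$1 * v$2 = 0" using c[of 0] z[of 0] E[of 0] by (simp add: e33_def)
  have 1: "a$1 * v$0 + (a$0 + a$2) * v$1 + (a$1 + a$2) * v$2 = 0" using c[of 1] z[of 1] E[of 1] by (simp add: e33_def)
  have 2: "a$2 * v$0 + a$1 * v$1 + (a$0 + a$2) * v$2 = 0" using c[of 2] z[of 2] E[of 2] by (simp add: e33_def)
  have an: "\<not>(a$0 = 0 \<and> a$1 = 0 \<and> a$2 = 0)" using a vec3_zero by blast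
  have vn: "\<not>(v$0 = 0 \<and> v$1 = 0 \<and> v$2 = 0)" using v vec3_zero by blast
  show False using F8[OF 0 1 2 an vn] .
qed


lemma F8': fixes a0 a1 a2 v0 v1 :: bit
  assumes "a0 * v0 + a2 * v1 = 0"
   "a1 * v0 + (a0 + a2) * v1 = 0"
   "a2 * v0 + a1 * v1 = 0"
   "\<not>(a0 = 0 \<and> a1 = 0 \<and> a2 = 0)" "\<not>(v0 = 0 \<and> v1 = 0)"
 shows False
  using assms by (cases a0; cases a1; cases a2; cases v0; cases v1) simp_all

lemma F4: fixes a0 a1 v0 v1 :: bit
  assumes "a0 * v0 + a1 * v1 = 0"
   "a1 * v0 + (a0 + a1) * v1 = 0"
   "\<not>(a0 = 0 \<and> a1 = 0)" "\<not>(v0 = 0 \<and> v1 = 0)"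
 shows False
  using assms by (cases a0; cases a1; cases v0; cases v1) simp_all

lemma vec2_zero: "v \<in> carrier_vec 2 \<Longrightarrow> (v = 0\<^sub>v 2) \<longleftrightarrow> (v$0 = 0 \<and> v$1 = 0)"
  apply (auto simp: vec_eq_iff)
  by (metis less_2_cases)

lemma bitlin: "(x::bit) - y + (z - w) = (x + z) - (y + w)"
  by (cases x; cases y; cases z; cases w) simp_all

lemma e33_lin:
  assumes a: "a \<in> carrier_vec 3" and b: "b \<in> carrier_vec 3" and i: "i < 3"
  shows "e33 (a - b) i j = e33 a i j - e33 b i j"
proof -
  have m: "(a - b) $ k = a $ k - b $ k" if "k < 3" for k using a b that by simp
  show ?thesis using i m[of 0] m[of 1] m[of 2] m[of i]
    by (auto simp: e33_def bitlin simp del: minus_bit_def add_bit_eq_xor mult_bit_eq_and)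
qed

lemma mk33_car: "mk33 a \<in> carrier_mat 3 3" by (simp add: mk33_def)

lemma mk33_lin: "a \<in> carrier_vec 3 \<Longrightarrow> b \<in> carrier_vec 3 \<Longrightarrow> mk33 a - mk33 b = mk33 (a - b)"
  by (rule eq_matI) (auto simp: mk33_def e33_lin)

definition mk32 :: "bit vec \<Rightarrow> bit mat" where
  "mk32 a = mat 3 2 (\<lambda>(i,j). e33 a i j)"

lemma mk32_car: "mk32 a \<in> carrier_mat 3 2" by (simp add: mk32_def)

lemma mk32_lin: "a \<in> carrier_vec 3 \<Longrightarrow> b \<in> carrier_vec 3 \<Longrightarrow> mk32 a - mk32 b = mk32 (a - b)"
  by (rule eq_matI) (auto simp: mk32_def e33_lin)

lemma mk32_kernel:
  assumes a: "a \<in> carrier_vec 3" "a \<noteq> 0\<^sub>v 3" and v: "v \<in> carrier_vec 2" "v \<noteq> 0\<^sub>v 2"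
  shows "mk32 a *\<^sub>v v \<noteq> 0\<^sub>v 3"
proof
  assume h: "mk32 a *\<^sub>v v = 0\<^sub>v 3"
  have c: "(mk32 a *\<^sub>v v) $ i = (\<Sum>j<2. e33 a i j * v $ j)" if "i < 3" for i
    using that v by (simp add: mk32_def scalar_prod_def atLeast0LessThan)
  have z: "(mk32 a *\<^sub>v v) $ i = 0" if "i < 3" for i using h that by simp
  have E: "(\<Sum>j<2. e33 a i j * v $ j) = e33 a i 0 * v$0 + e33 a i 1 * v$1" for i
    by (simp add: eval_nat_numeral)
  have 0: "a$0 * v$0 + a$2 * v$1 = 0" using c[of 0] z[of 0] E[of 0] by (simp add: e33_def)
  have 1: "a$1 * v$0 + (a$0 + a$2) * v$1 = 0" using c[of 1] z[of 1] E[of 1] by (simp add: e33_def)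
  have 2: "a$2 * v$0 + a$1 * v$1 = 0" using c[of 2] z[of 2] E[of 2] by (simp add: e33_def)
  have an: "\<not>(a$0 = 0 \<and> a$1 = 0 \<and> a$2 = 0)" using a vec3_zero by blast
  have vn: "\<not>(v$0 = 0 \<and> v$1 = 0)" using v vec2_zero by blast
  show False using F8'[OF 0 1 2 an vn] .
qed

definition e22 :: "bit vec \<Rightarrow> nat \<Rightarrow> nat \<Rightarrow> bit" where
  "e22 a i j = (if j = 0 then a $ i else if i = 0 then a$1 else a$0 + a$1)"

definition mk22 :: "bit vec \<Rightarrow> bit mat" where
  "mk22 a = mat 2 2 (\<lambda>(i,j). e22 a i j)"

lemma e22_lin:
  assumes a: "a \<in> carrier_vec 2" and b: "b \<in> carrier_vec 2" and i: "i < 2"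
  shows "e22 (a - b) i j = e22 a i j - e22 b i j"
proof -
  have m: "(a - b) $ k = a $ k - b $ k" if "k < 2" for k using a b that by simp
  show ?thesis using i m[of 0] m[of 1] m[of i]
    by (auto simp: e22_def bitlin simp del: minus_bit_def add_bit_eq_xor mult_bit_eq_and)
qed

lemma mk22_car: "mk22 a \<in> carrier_mat 2 2" by (simp add: mk22_def)

lemma mk22_lin: "a \<in> carrier_vec 2 \<Longrightarrow> b \<in> carrier_vec 2 \<Longrightarrow> mk22 a - mk22 b = mk22 (a - b)"
  by (rule eq_matI) (auto simp: mk22_def e22_lin)

lemma mk22_kernel:
  assumes a: "a \<in> carrier_vec 2" "a \<noteq> 0\<^sub>v 2" and v: "v \<in> carrier_vec 2" "v \<noteq> 0\<^sub>v 2"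
  shows "mk22 a *\<^sub>v v \<noteq> 0\<^sub>v 2"
proof
  assume h: "mk22 a *\<^sub>v v = 0\<^sub>v 2"
  have c: "(mk22 a *\<^sub>v v) $ i = (\<Sum>j<2. e22 a i j * v $ j)" if "i < 2" for i
    using that v by (simp add: mk22_def scalar_prod_def atLeast0LessThan)
  have z: "(mk22 a *\<^sub>v v) $ i = 0" if "i < 2" for i using h that by simp
  have E: "(\<Sum>j<2. e22 a i j * v $ j) = e22 a i 0 * v$0 + e22 a i 1 * v$1" for i
    by (simp add: eval_nat_numeral)
  have 0: "a$0 * v$0 + a$1 * v$1 = 0" using c[of 0] z[of 0] E[of 0] by (simp add: e22_def)
  have 1: "a$1 * v$0 + (a$0 + a$1) * v$1 = 0" using c[of 1] z[of 1] E[of 1] by (simp add: e22_def)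
  have an: "\<not>(a$0 = 0 \<and> a$1 = 0)" using a vec2_zero by blast
  have vn: "\<not>(v$0 = 0 \<and> v$1 = 0)" using v vec2_zero by blast
  show False using F4[OF 0 1 an vn] .
qed

definition mk1 :: "nat \<Rightarrow> bit vec \<Rightarrow> bit mat" where
  "mk1 N a = mat N 1 (\<lambda>(i,j). a $ i)"

lemma mk1_car: "mk1 N a \<in> carrier_mat N 1" by (simp add: mk1_def)

lemma mk1_lin: "a \<in> carrier_vec N \<Longrightarrow> b \<in> carrier_vec N \<Longrightarrow> mk1 N a - mk1 N b = mk1 N (a - b)"
  by (rule eq_matI) (auto simp: mk1_def)

lemma mk1_kernel:
  assumes a: "a \<in> carrier_vec N" "a \<noteq> 0\<^sub>v N" and v: "v \<in> carrier_vec 1" "v \<noteq> 0\<^sub>v 1"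
  shows "mk1 N a *\<^sub>v v \<noteq> 0\<^sub>v N"
proof -
  have "v $ 0 \<noteq> 0"
  proof
    assume "v $ 0 = 0"
    then have "v = 0\<^sub>v 1" using v by (intro eq_vecI) auto
    then show False using v by simp
  qed
  then have v1: "v $ 0 = 1" by simp
  have "mk1 N a *\<^sub>v v = a"
    by (rule eq_vecI) (use a v v1 in \<open>auto simp: mk1_def scalar_prod_def\<close>)
  then show ?thesis using a by simp
qed

theorem proposition4p2:
  fixes N n :: nat
  assumes "(N \<ge> 1 \<and> n = 1) \<or> (N, n) \<in> {(2, 2), (3, 2), (3, 3)}"
  shows "chi TYPE(bit) n N n = 2 ^ N"
proof -
  consider "n = 1" | "N = 2" "n = 2" | "N = 3" "n = 2" | "N = 3" "n = 3" using assms by auto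
  then show ?thesis
  proof cases
    case 1
    show ?thesis unfolding 1
    proof (rule chi_eq_gen)
      fix L \<Gamma> assume c: "exact_dist_coloring TYPE(bit) 1 N 1 L \<Gamma>"
      show "2 ^ N \<le> L"
        by (rule lower_bound_gen[where mk="mk1 N", OF _ _ _ c];
            (rule mk1_car | rule mk1_lin | rule mk1_kernel); assumption)
    qed simp
  next
    case 2
    show ?thesis unfolding 2
    proof (rule chi_eq_gen)
      fix L \<Gamma> assume c: "exact_dist_coloring TYPE(bit) 2 2 2 L \<Gamma>"
      show "2 ^ 2 \<le> L"
        by (rule lower_bound_gen[where mk="mk22", OF _ _ _ c];
            (rule mk22_car | rule mk22_lin | rule mk22_kernel); assumption)
    qed simp
  next
    case 3
    show ?thesis unfolding 3
    proof (rule chi_eq_gen)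
      fix L \<Gamma> assume c: "exact_dist_coloring TYPE(bit) 2 3 2 L \<Gamma>"
      show "2 ^ 3 \<le> L"
        by (rule lower_bound_gen[where mk="mk32", OF _ _ _ c];
            (rule mk32_car | rule mk32_lin | rule mk32_kernel); assumption)
    qed simp
  next
    case 4
    show ?thesis unfolding 4
    proof (rule chi_eq_gen)
      fix L \<Gamma> assume c: "exact_dist_coloring TYPE(bit) 3 3 3 L \<Gamma>"
      show "2 ^ 3 \<le> L"
        by (rule lower_bound_gen[where mk="mk33", OF _ _ _ c];
            (rule mk33_car | rule mk33_lin | rule mk33_kernel); assumption)
    qed simp
  qed
qed

end
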